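(* (i) For every constant $C > e^2$, $g(r^{(\log C)/2}, r^{r/(2C)}) \le r$ for all sufficiently large $r$. (ii) For every constant $\varepsilon>0$, $g(2^{\varepsilon \log^2 r}, 2^{r^{1-\varepsilon}}) \le r$ for all sufficiently large $r$. (iii) There exists a positive constant $c$ such that $g(cr^2, r^{r^2/2}/e^{r^2}) \le r$ for all sufficiently large $r$.
   Context: All logarithms are base 2; non-integer arguments are understood to be rounded to integers (the paper omits floor and ceiling signs). For positive integers $m,n$, the grid graph $\Gamma_{m,n}$ is the graph on vertex set $[m]\times[n]$ in which distinct vertices $(i,j),(i',j')$ are adjacent iff $i=i'$ or $j=j'$. A rectangle is the induced subgraph on $\{(i,j),(i',j),(i,j'),(i',j')\}$ with $i<i'$, $j<j'$; in an edge coloring it is alternating if $\{(i,j),(i',j)\}$ and $\{(i,j'),(i',j')\}$ have the same color and $\{(i,j),(i,j')\}$ and $\{(i',j),(i',j')\}$ have the same color. $g(m,n)$ is the minimum integer $r$ for which there exists an edge coloring of $\Gamma_{m,n}$ with $r$ colors containing no alternating rectangle. *)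

theory Defs
  imports Complex_Main
begin

definition grid_adj :: "nat \<Rightarrow> nat \<Rightarrow> nat \<times> nat \<Rightarrow> nat \<times> nat \<Rightarrow> bool" where
  "grid_adj m n u v \<longleftrightarrow> u \<in> {1..m} \<times> {1..n} \<and> v \<in> {1..m} \<times> {1..n} \<and> u \<noteq> v
     \<and> (fst u = fst v \<or> snd u = snd v)"

definition grid_edges :: "nat \<Rightarrow> nat \<Rightarrow> (nat \<times> nat) set set" where
  "grid_edges m n = {{u, v} | u v. grid_adj m n u v}"

definition has_alternating_rectangle :: "((nat \<times> nat) set \<Rightarrow> nat) \<Rightarrow> nat \<Rightarrow> nat \<Rightarrow> bool" where
  "has_alternating_rectangle c m n \<longleftrightarrow>
     (\<exists>i i' j j'. 1 \<le> i \<and> i < i' \<and> i' \<le> m \<and> 1 \<le> j \<and> j < j' \<and> j' \<le> n \<and>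
        c {(i, j), (i', j)} = c {(i, j'), (i', j')} \<and>
        c {(i, j), (i, j')} = c {(i', j), (i', j')})"

definition good_coloring :: "nat \<Rightarrow> nat \<Rightarrow> nat \<Rightarrow> ((nat \<times> nat) set \<Rightarrow> nat) \<Rightarrow> bool" where
  "good_coloring m n r c \<longleftrightarrow> (\<forall>e \<in> grid_edges m n. c e < r) \<and> \<not> has_alternating_rectangle c m n"

definition g :: "nat \<Rightarrow> nat \<Rightarrow> nat" where
  "g m n = (LEAST r. \<exists>c. good_coloring m n r c)"

end

theory Submission
  imports Defs "HOL-Library.FuncSet" "HOL-Library.Discrete_Functions" "HOL-Real_Asymp.Real_Asymp"
begin

definition colPQ :: "(nat \<Rightarrow> nat \<Rightarrow> nat \<Rightarrow> nat) \<Rightarrow> (nat \<Rightarrow> nat \<Rightarrow> nat \<Rightarrow> nat) \<Rightarrow> (nat \<times> nat) set \<Rightarrow> nat" where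
  "colPQ P Q e = (if card (fst ` e) = 1 then P (the_elem (fst ` e)) (Min (snd ` e)) (Max (snd ` e))
                  else Q (Min (fst ` e)) (Max (fst ` e)) (the_elem (snd ` e)))"

lemma colPQ_col: "j < j' \<Longrightarrow> colPQ P Q {(i,j),(i,j')} = P i j j'"
  unfolding colPQ_def by (simp add: the_elem_def)

lemma colPQ_row: "i < i' \<Longrightarrow> colPQ P Q {(i,j),(i',j)} = Q i i' j"
  unfolding colPQ_def by (simp add: the_elem_def)

lemma g_le_PQ:
  assumes P: "\<And>i j j'. P i j j' < r" and Q: "\<And>i i' j. Q i i' j < r"
    and H: "\<And>i i' j j'. 1 \<le> i \<Longrightarrow> i < i' \<Longrightarrow> i' \<le> m \<Longrightarrow> 1 \<le> j \<Longrightarrow> j < j' \<Longrightarrow> j' \<le> n \<Longrightarrow>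
            P i j j' = P i' j j' \<Longrightarrow> Q i i' j \<noteq> Q i i' j'"
  shows "g m n \<le> r"
proof -
  have "good_coloring m n r (colPQ P Q)"
    unfolding good_coloring_def has_alternating_rectangle_def
  proof (intro conjI ballI notI)
    fix e assume "e \<in> grid_edges m n"
    show "colPQ P Q e < r" unfolding colPQ_def using P Q by simp
  next
    assume "\<exists>i i' j j'. 1 \<le> i \<and> i < i' \<and> i' \<le> m \<and> 1 \<le> j \<and> j < j' \<and> j' \<le> n \<and>
        colPQ P Q {(i, j), (i', j)} = colPQ P Q {(i, j'), (i', j')} \<and>
        colPQ P Q {(i, j), (i, j')} = colPQ P Q {(i', j), (i', j')}"
    then obtain i i' j j' where "1 \<le> i" "i < i'" "i' \<le> m" "1 \<le> j" "j < j'" "j' \<le> n"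
      "colPQ P Q {(i, j), (i', j)} = colPQ P Q {(i, j'), (i', j')}"
      "colPQ P Q {(i, j), (i, j')} = colPQ P Q {(i', j), (i', j')}" by blast
    then show False using H[of i i' j j'] by (simp add: colPQ_col colPQ_row)
  qed
  then show ?thesis unfolding g_def by (rule Least_le[where P="\<lambda>r. \<exists>c. good_coloring m n r c", OF exI])
qed

lemma g_le_colfam:
  assumes X: "\<And>i j j'. X i j j' < r"
    and H: "\<And>i i'. 1 \<le> i \<Longrightarrow> i < i' \<Longrightarrow> i' \<le> m \<Longrightarrow>
       \<exists>q. (\<forall>j. q j < r) \<and> (\<forall>j j'. 1 \<le> j \<and> j < j' \<and> j' \<le> n \<and> X i j j' = X i' j j' \<longrightarrow> q j \<noteq> q j')"
  shows "g m n \<le> r"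
proof -
  define Q where "Q i i' j = (if 1 \<le> i \<and> i < i' \<and> i' \<le> m then (SOME q. (\<forall>j. q j < r) \<and> (\<forall>j j'. 1 \<le> j \<and> j < j' \<and> j' \<le> n \<and> X i j j' = X i' j j' \<longrightarrow> q j \<noteq> q j')) j else 0)" for i i' j
  have r0: "0 < r" using X[of 0 0 0] by simp
  show ?thesis
  proof (rule g_le_PQ[where P=X and Q=Q])
    fix i i' j show "Q i i' j < r"
    proof (cases "1 \<le> i \<and> i < i' \<and> i' \<le> m")
      case True
      from someI_ex[OF H[of i i']] True show ?thesis unfolding Q_def by auto
    qed (use r0 Q_def in auto)
  next
    fix i i' j j' assume a: "1 \<le> i" "i < i'" "i' \<le> m" "1 \<le> j" "j < j'" "j' \<le> n" "X i j j' = X i' j j'"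
    from someI_ex[OF H[of i i']] a show "Q i i' j \<noteq> Q i i' j'" unfolding Q_def by auto
  qed (rule X)
qed

lemma g_le_rowfam:
  assumes Y: "\<And>j i i'. Y j i i' < r"
    and H: "\<And>j j'. 1 \<le> j \<Longrightarrow> j < j' \<Longrightarrow> j' \<le> n \<Longrightarrow>
       \<exists>q. (\<forall>i. q i < r) \<and> (\<forall>i i'. 1 \<le> i \<and> i < i' \<and> i' \<le> m \<and> Y j i i' = Y j' i i' \<longrightarrow> q i \<noteq> q i')"
  shows "g m n \<le> r"
proof -
  define P where "P i j j' = (if 1 \<le> j \<and> j < j' \<and> j' \<le> n then (SOME q. (\<forall>i. q i < r) \<and> (\<forall>i i'. 1 \<le> i \<and> i < i' \<and> i' \<le> m \<and> Y j i i' = Y j' i i' \<longrightarrow> q i \<noteq> q i')) i else 0)" for i j j'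
  have r0: "0 < r" using Y[of 0 0 0] by simp
  show ?thesis
  proof (rule g_le_PQ[where P=P and Q="\<lambda>i i' j. Y j i i'"])
    fix i j j' show "P i j j' < r"
    proof (cases "1 \<le> j \<and> j < j' \<and> j' \<le> n")
      case True
      from someI_ex[OF H[of j j']] True show ?thesis unfolding P_def by auto
    qed (use r0 P_def in auto)
  next
    fix i i' j j' assume a: "1 \<le> i" "i < i'" "i' \<le> m" "1 \<le> j" "j < j'" "j' \<le> n" "P i j j' = P i' j j'"
    from someI_ex[OF H[of j j']] a show "Y j i i' \<noteq> Y j' i i'" unfolding P_def by auto
  qed (rule Y)
qed

lemma small_image_col:
  assumes "finite (\<phi> ` A)" "card (\<phi> ` A) \<le> r" "0 < r"
  shows "\<exists>q. (\<forall>x. q x < r) \<and> (\<forall>x\<in>A. \<forall>y\<in>A. \<phi> x \<noteq> \<phi> y \<longrightarrow> q x \<noteq> q y)"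
proof -
  have False: "r \<noteq> 0" using assms by auto
  obtain h where h: "bij_betw h (\<phi> ` A) {0..<card (\<phi> ` A)}" using ex_bij_betw_finite_nat[OF assms(1)] by blast
  define q where "q x = (if x \<in> A then h (\<phi> x) else 0)" for x
  have "\<forall>x. q x < r"
  proof
    fix x show "q x < r"
      using bij_betwE[OF h] assms(2) False unfolding q_def by (cases "x \<in> A") auto
  qed
  moreover have "\<forall>x\<in>A. \<forall>y\<in>A. \<phi> x \<noteq> \<phi> y \<longrightarrow> q x \<noteq> q y"
    using bij_betw_imp_inj_on[OF h] unfolding q_def by (auto dest: inj_onD)
  ultimately show ?thesis by blast
qed

definition fdiff :: "nat \<Rightarrow> nat \<Rightarrow> nat" where
  "fdiff a b = (LEAST l. bit a l \<noteq> bit b l)"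

lemma fdiff_bit: "a \<noteq> b \<Longrightarrow> bit a (fdiff a b) \<noteq> bit b (fdiff a b)"
  unfolding fdiff_def by (rule LeastI_ex) (metis bit_eq_iff)

lemma bit_big: "(a::nat) < 2 ^ L \<Longrightarrow> L \<le> l \<Longrightarrow> \<not> bit a l"
proof -
  assume "a < 2 ^ L" "L \<le> l"
  then have "a < 2 ^ l" by (meson order_less_le_trans one_le_numeral power_increasing)
  then show ?thesis by (simp add: bit_iff_odd)
qed

lemma fdiff_lt: "a \<noteq> b \<Longrightarrow> (a::nat) < 2 ^ L \<Longrightarrow> b < 2 ^ L \<Longrightarrow> fdiff a b < L"
  using fdiff_bit[of a b] bit_big[of a L] bit_big[of b L] by (meson not_le)

lemma fdiff_sym: "fdiff a b = fdiff b a"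
  unfolding fdiff_def by metis

lemma g_le_code:
  assumes \<sigma>: "\<And>i l. \<sigma> i l < r"
    and agree: "\<And>i i'. 1 \<le> i \<Longrightarrow> i < i' \<Longrightarrow> i' \<le> m \<Longrightarrow> card {l. l < L \<and> \<sigma> i l = \<sigma> i' l} \<le> K"
    and K: "2 ^ K \<le> r" and n: "n \<le> 2 ^ L"
  shows "g m n \<le> r"
proof (rule g_le_colfam[where X="\<lambda>i j j'. \<sigma> i (fdiff (j - 1) (j' - 1))"])
  fix i j j' show "\<sigma> i (fdiff (j - 1) (j' - 1)) < r" by (rule \<sigma>)
next
  fix i i' assume ii: "1 \<le> i" "i < i'" "i' \<le> m"
  define S where "S = {l. l < L \<and> \<sigma> i l = \<sigma> i' l}"
  define \<phi> where "\<phi> j = {l \<in> S. bit (j - 1) l}" for j :: nat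
  have fS: "finite S" unfolding S_def by auto
  have "\<phi> ` {1..n} \<subseteq> Pow S" unfolding \<phi>_def by auto
  then have f1: "finite (\<phi> ` {1..n})" and c1: "card (\<phi> ` {1..n}) \<le> 2 ^ card S"
    using fS by (auto intro: finite_subset simp: card_mono card_Pow[symmetric])
  have "card S \<le> K" using agree[OF ii] unfolding S_def .
  then have "2 ^ card S \<le> r" using K by (meson dual_order.trans one_le_numeral power_increasing)
  with c1 have c2: "card (\<phi> ` {1..n}) \<le> r" by simp
  obtain q where q: "\<forall>x. q x < r" "\<forall>x\<in>{1..n}. \<forall>y\<in>{1..n}. \<phi> x \<noteq> \<phi> y \<longrightarrow> q x \<noteq> q y"
    using small_image_col[OF f1 c2] \<sigma>[of 0 0] by fastforce
  show "\<exists>q. (\<forall>j. q j < r) \<and> (\<forall>j j'. 1 \<le> j \<and> j < j' \<and> j' \<le> n \<and> \<sigma> i (fdiff (j - 1) (j' - 1)) = \<sigma> i' (fdiff (j - 1) (j' - 1)) \<longrightarrow> q j \<noteq> q j')"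
  proof (intro exI conjI allI impI)
    fix x show "q x < r" using q by auto
  next
    fix j j' assume a: "1 \<le> j \<and> j < j' \<and> j' \<le> n \<and> \<sigma> i (fdiff (j - 1) (j' - 1)) = \<sigma> i' (fdiff (j - 1) (j' - 1))"
    define d where "d = fdiff (j - 1) (j' - 1)"
    have ne: "j - 1 \<noteq> j' - 1" using a by auto
    have "d < L" unfolding d_def using a n by (intro fdiff_lt) auto
    then have dS: "d \<in> S" using a unfolding S_def d_def by auto
    have "bit (j - 1) d \<noteq> bit (j' - 1) d" unfolding d_def using fdiff_bit[OF ne] .
    then have "\<phi> j \<noteq> \<phi> j'" using dS unfolding \<phi>_def by blast
    then show "q j \<noteq> q j'" using q a by auto
  qed
qed

lemma greedy:
  assumes fin: "finite U" and sym: "\<And>f h. bad f h \<Longrightarrow> bad h f"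
    and bnd: "\<And>f. f \<in> U \<Longrightarrow> card {h\<in>U. bad f h} \<le> b"
  shows "m * b < card U \<Longrightarrow> \<exists>\<sigma>. (\<forall>i<m. \<sigma> i \<in> U) \<and> (\<forall>i<m. \<forall>i'<m. i \<noteq> i' \<longrightarrow> \<not> bad (\<sigma> i) (\<sigma> i'))"
proof (induction m)
  case 0 then show ?case by auto
next
  case (Suc m)
  then have "m * b < card U" using Suc.prems by (metis add.commute le_add2 le_less_trans mult_Suc)
  with Suc.IH obtain \<sigma> where s1: "\<forall>i<m. \<sigma> i \<in> U" and s2: "\<forall>i<m. \<forall>i'<m. i \<noteq> i' \<longrightarrow> \<not> bad (\<sigma> i) (\<sigma> i')" by blast
  define W where "W = (\<Union>i<m. {h\<in>U. bad (\<sigma> i) h})"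
  have "card W \<le> (\<Sum>i<m. card {h\<in>U. bad (\<sigma> i) h})" unfolding W_def by (rule card_UN_le) simp
  also have "\<dots> \<le> (\<Sum>i<m. b)" using s1 bnd by (intro sum_mono) auto
  also have "\<dots> = m * b" by simp
  finally have "card W < card U" using Suc.prems by simp
  moreover have "W \<subseteq> U" unfolding W_def by auto
  ultimately have "\<not> U \<subseteq> W" by auto
  then obtain h where h: "h \<in> U" "h \<notin> W" by blast
  define \<sigma>' where "\<sigma>' = \<sigma>(m := h)"
  have "\<forall>i<Suc m. \<sigma>' i \<in> U" using s1 h unfolding \<sigma>'_def by (auto simp: less_Suc_eq)
  moreover have "\<forall>i<Suc m. \<forall>i'<Suc m. i \<noteq> i' \<longrightarrow> \<not> bad (\<sigma>' i) (\<sigma>' i')"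
    using s1 s2 h unfolding \<sigma>'_def W_def by (auto simp: less_Suc_eq dest: sym)
  ultimately show ?case by blast
qed

lemma card_agree_fixed:
  assumes T: "T \<subseteq> {0..<L}" and f: "\<forall>l\<in>T. f l < r"
  shows "card {h \<in> PiE {0..<L} (\<lambda>_. {0..<r}). \<forall>l\<in>T. h l = f l} = r ^ (L - card T)"
proof -
  have "{h \<in> PiE {0..<L} (\<lambda>_. {0..<r}). \<forall>l\<in>T. h l = f l} = PiE {0..<L} (\<lambda>l. if l \<in> T then {f l} else {0..<r})"
    using T f by (auto simp: PiE_iff extensional_def split: if_splits)
  then have "card {h \<in> PiE {0..<L} (\<lambda>_. {0..<r}). \<forall>l\<in>T. h l = f l} = (\<Prod>l\<in>{0..<L}. if l \<in> T then 1 else r)"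
    by (simp add: card_PiE if_distrib cong: if_cong)
  also have "\<dots> = r ^ card ({0..<L} - T)"
    by (simp add: prod.If_cases Diff_eq)
  also have "card ({0..<L} - T) = L - card T" using T by (simp add: card_Diff_subset finite_subset)
  finally show ?thesis .
qed

lemma bad_count:
  assumes f: "f \<in> PiE {0..<L} (\<lambda>_. {0..<r})"
  shows "card {h \<in> PiE {0..<L} (\<lambda>_. {0..<r}). K < card {l. l < L \<and> f l = h l}} \<le> (L choose (Suc K)) * r ^ (L - Suc K)"
proof -
  let ?U = "PiE {0..<L} (\<lambda>_. {0..<r})"
  let ?Ts = "{T. T \<subseteq> {0..<L} \<and> card T = Suc K}"
  have sub: "{h \<in> ?U. K < card {l. l < L \<and> f l = h l}} \<subseteq> (\<Union>T\<in>?Ts. {h \<in> ?U. \<forall>l\<in>T. h l = f l})"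
  proof
    fix h assume "h \<in> {h \<in> ?U. K < card {l. l < L \<and> f l = h l}}"
    then have h: "h \<in> ?U" "Suc K \<le> card {l. l < L \<and> f l = h l}" by auto
    obtain T where "T \<subseteq> {l. l < L \<and> f l = h l}" "card T = Suc K"
      using obtain_subset_with_card_n[OF h(2)] by blast
    then show "h \<in> (\<Union>T\<in>?Ts. {h \<in> ?U. \<forall>l\<in>T. h l = f l})" using h by (intro UN_I[of T]) auto
  qed
  have "card {h \<in> ?U. K < card {l. l < L \<and> f l = h l}} \<le> card (\<Union>T\<in>?Ts. {h \<in> ?U. \<forall>l\<in>T. h l = f l})"
    by (rule card_mono[OF _ sub]) (auto intro!: finite_PiE)
  also have "\<dots> \<le> (\<Sum>T\<in>?Ts. card {h \<in> ?U. \<forall>l\<in>T. h l = f l})" by (rule card_UN_le) auto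
  also have "\<dots> = (\<Sum>T\<in>?Ts. r ^ (L - Suc K))"
  proof (rule sum.cong[OF refl])
    fix T assume "T \<in> ?Ts"
    moreover have "\<forall>l\<in>T. f l < r" using f calculation by (auto simp: PiE_iff)
    ultimately show "card {h \<in> ?U. \<forall>l\<in>T. h l = f l} = r ^ (L - Suc K)"
      using card_agree_fixed[of T L f r] by auto
  qed
  also have "\<dots> = (L choose (Suc K)) * r ^ (L - Suc K)"
    using n_subsets[of "{0..<L}" "Suc K"] by simp
  finally show ?thesis .
qed

lemma g_le_code_count:
  assumes cnt: "m * ((L choose (Suc K)) * r ^ (L - Suc K)) < r ^ L"
    and K: "2 ^ K \<le> r" and n: "n \<le> 2 ^ L"
  shows "g m n \<le> r"
proof -
  let ?U = "PiE {0..<L} (\<lambda>_. {0..<r})"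
  have cU: "card ?U = r ^ L" by (simp add: card_PiE)
  have sym: "K < card {l. l < L \<and> h l = f l}" if "K < card {l. l < L \<and> f l = h l}" for f h :: "nat \<Rightarrow> nat"
  proof -
    have "{l. l < L \<and> h l = f l} = {l. l < L \<and> f l = h l}" by auto
    then show ?thesis using that by simp
  qed
  have fU: "finite ?U" by (simp add: finite_PiE)
  have cnt': "m * ((L choose (Suc K)) * r ^ (L - Suc K)) < card ?U" using cnt cU by simp
  obtain \<sigma> where s1: "\<forall>i<m. \<sigma> i \<in> ?U"
    and s2: "\<forall>i<m. \<forall>i'<m. i \<noteq> i' \<longrightarrow> \<not> K < card {l. l < L \<and> \<sigma> i l = \<sigma> i' l}"
    using greedy[of ?U "\<lambda>f h. K < card {l. l < L \<and> f l = h l}", OF fU sym bad_count cnt'] by blast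
  define \<tau> where "\<tau> i l = (if \<sigma> (i - 1) l < r then \<sigma> (i - 1) l else 0)" for i l
  have r0: "0 < r" using K by (metis less_le_trans zero_less_numeral zero_less_power)
  show ?thesis
  proof (rule g_le_code[where \<sigma>=\<tau> and K=K and L=L])
    fix i l show "\<tau> i l < r" unfolding \<tau>_def using r0 by auto
  next
    fix i i' assume a: "1 \<le> i" "i < i'" "i' \<le> m"
    have "{l. l < L \<and> \<tau> i l = \<tau> i' l} = {l. l < L \<and> \<sigma> (i - 1) l = \<sigma> (i' - 1) l}"
      using s1 a unfolding \<tau>_def by (auto simp: PiE_iff)
    moreover have "\<not> K < card {l. l < L \<and> \<sigma> (i - 1) l = \<sigma> (i' - 1) l}"
      using s2 a by auto
    ultimately show "card {l. l < L \<and> \<tau> i l = \<tau> i' l} \<le> K" by simp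
  qed (use K n in auto)
qed

lemma pow_div_fact_le_exp: "(x::real) \<ge> 0 \<Longrightarrow> x ^ k / fact k \<le> exp x"
proof -
  assume x: "x \<ge> 0"
  have s: "(\<lambda>n. x ^ n /\<^sub>R fact n) sums exp x" by (rule exp_converges)
  have "(\<Sum>n\<in>{k}. x ^ n /\<^sub>R fact n) \<le> suminf (\<lambda>n. x ^ n /\<^sub>R fact n)"
    by (rule sum_le_suminf) (use s x in \<open>auto simp: sums_iff\<close>)
  then show ?thesis using s by (simp add: sums_iff divide_inverse mult.commute)
qed

lemma fact_lower: "(real k / exp 1) ^ k \<le> fact k"
proof -
  have "real k ^ k / fact k \<le> exp (real k)" by (rule pow_div_fact_le_exp) simp
  then have "real k ^ k \<le> exp (real k) * fact k" by (simp add: field_simps)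
  moreover have "exp (real k) = exp 1 ^ k" by (simp add: exp_of_nat_mult[symmetric])
  ultimately show ?thesis by (simp add: power_divide field_simps)
qed

lemma binom_real_bound: "real (L choose k) \<le> (exp 1 * real L / real k) ^ k"
proof (cases "k = 0")
  case True then show ?thesis by simp
next
  case False
  have "real (L choose k) * fact k \<le> real L ^ k"
    using binomial_fact_pow[of L k] by (metis of_nat_fact of_nat_le_iff of_nat_mult of_nat_power)
  then have "real (L choose k) \<le> real L ^ k / fact k" by (simp add: field_simps)
  also have "\<dots> \<le> real L ^ k / (real k / exp 1) ^ k"
    using fact_lower[of k] False by (intro divide_left_mono) auto
  also have "\<dots> = (exp 1 * real L / real k) ^ k" by (simp add: power_divide field_simps)
  finally show ?thesis .
qed

lemma g_le_code_real:
  assumes K: "2 ^ K \<le> r" and n: "n \<le> 2 ^ L"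
    and R: "real m * (exp 1 * real L / (real (Suc K) * real r)) ^ Suc K < 1"
  shows "g m n \<le> r"
proof (rule g_le_code_count[OF _ K n])
  have r0: "0 < r" using K by (metis less_le_trans zero_less_numeral zero_less_power)
  show "m * ((L choose Suc K) * r ^ (L - Suc K)) < r ^ L"
  proof (cases "L < Suc K")
    case True then show ?thesis using r0 by (simp add: binomial_eq_0)
  next
    case False
    have "real m * real (L choose Suc K) \<le> real m * (exp 1 * real L / real (Suc K)) ^ Suc K"
      by (intro mult_left_mono binom_real_bound) auto
    also have "\<dots> = real m * (exp 1 * real L / (real (Suc K) * real r)) ^ Suc K * real r ^ Suc K"
    proof -
      have "(exp 1 * real L / (real (Suc K) * real r)) * real r = exp 1 * real L / real (Suc K)" using r0 by simp
      then have "(exp 1 * real L / (real (Suc K) * real r)) ^ Suc K * real r ^ Suc K = (exp 1 * real L / real (Suc K)) ^ Suc K"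
        by (metis power_mult_distrib)
      then show ?thesis by (metis mult.assoc)
    qed
    also have "\<dots> < 1 * real r ^ Suc K" by (rule mult_strict_right_mono[OF R]) (use r0 in simp)
    finally have "m * (L choose Suc K) < r ^ Suc K" by (simp flip: of_nat_mult of_nat_power)
    then have "m * (L choose Suc K) * r ^ (L - Suc K) < r ^ Suc K * r ^ (L - Suc K)"
      using r0 by simp
    also have "\<dots> = r ^ (Suc K + (L - Suc K))" by (simp only: power_add)
    also have "\<dots> = r ^ L" using False by simp
    finally show ?thesis by (simp add: mult.assoc)
  qed
qed

lemma g_le_asym:
  fixes r n m L :: nat and a \<gamma> :: real
  assumes r: "2 \<le> r" and n: "n \<le> 2 ^ L" and m: "real m \<le> real r powr a" and a: "0 \<le> a"
    and \<gamma>: "0 < \<gamma>" and Lb: "exp 1 * real L / (real r * log 2 (real r)) \<le> \<gamma>"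
    and key: "a + log 2 \<gamma> \<le> -1"
  shows "g m n \<le> r"
proof -
  define K where "K = floor_log r"
  have K1: "2 ^ K \<le> r" unfolding K_def using r by (intro floor_log_exp2_le) auto
  have "r < 2 * 2 ^ K" unfolding K_def by (rule floor_log_exp2_gt)
  then have "real r < 2 ^ Suc K" by (metis of_nat_less_iff of_nat_numeral of_nat_power power_Suc)
  then have "log 2 (real r) < log 2 (2 ^ Suc K)" using r by (subst log_less_cancel_iff) auto
  moreover have "log 2 ((2::real) ^ Suc K) = real (Suc K)" by (subst log_nat_power) auto
  ultimately have kt: "log 2 (real r) < real (Suc K)" by simp
  define t where "t = log 2 (real r)"
  have t1: "1 \<le> t" unfolding t_def using r by simp
  define \<beta> where "\<beta> = exp 1 * real L / (real (Suc K) * real r)"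
  have \<beta>0: "0 \<le> \<beta>" unfolding \<beta>_def by simp
  have "\<beta> \<le> exp 1 * real L / (real r * t)"
    unfolding \<beta>_def using kt t1 r unfolding t_def[symmetric]
    by (intro divide_left_mono mult_pos_pos) (auto simp: mult.commute)
  then have \<beta>\<gamma>: "\<beta> \<le> \<gamma>" using Lb unfolding t_def by simp
  have "log 2 \<gamma> \<le> -1" using key a by simp
  then have "2 powr (log 2 \<gamma>) \<le> 2 powr (-1)" by (intro powr_mono) auto
  then have \<gamma>1: "\<gamma> \<le> 1" using \<gamma> by simp
  have "\<beta> ^ Suc K \<le> \<gamma> ^ Suc K" by (rule power_mono[OF \<beta>\<gamma> \<beta>0])
  also have "\<dots> = \<gamma> powr real (Suc K)" using \<gamma> by (rule powr_realpow[symmetric])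
  also have "\<dots> \<le> \<gamma> powr t" using kt \<gamma> \<gamma>1 unfolding t_def[symmetric] by (intro powr_mono') auto
  finally have b1: "\<beta> ^ Suc K \<le> \<gamma> powr t" .
  have rr: "real r = 2 powr t" unfolding t_def using r by simp
  have "real m * \<beta> ^ Suc K \<le> real r powr a * \<gamma> powr t"
    using m b1 \<beta>0 by (intro mult_mono) auto
  also have "real r powr a = 2 powr (t * a)" by (simp add: rr powr_powr)
  also have "\<gamma> powr t = 2 powr (log 2 \<gamma> * t)" using \<gamma> by (simp add: powr_powr[symmetric])
  also have "2 powr (t * a) * 2 powr (log 2 \<gamma> * t) = 2 powr (t * (a + log 2 \<gamma>))"
    by (simp add: powr_add[symmetric] algebra_simps)
  also have "\<dots> \<le> 2 powr (t * -1)" using key t1 by (intro powr_mono mult_left_mono) auto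
  also have "\<dots> < 2 powr 0" using t1 by (intro powr_less_mono) auto
  also have "\<dots> = 1" by simp
  finally have R: "real m * \<beta> ^ Suc K < 1" .
  show ?thesis using g_le_code_real[OF K1 n] R unfolding \<beta>_def by simp
qed

lemma lim_inv_rlog: "(\<lambda>r::nat. 1 / (real r * log 2 (real r))) \<longlonglongrightarrow> 0"
  by real_asymp

lemma part1:
  fixes C :: real assumes C: "C > exp 2"
  shows "\<forall>\<^sub>F r in sequentially.
     g (nat \<lfloor>real r powr (log 2 C / 2)\<rfloor>) (nat \<lfloor>real r powr (real r / (2 * C))\<rfloor>) \<le> r"
proof -
  have C0: "C > 0" using C exp_gt_zero[of 2] by linarith
  have "exp 1 * exp 1 < C" using C by (simp add: exp_add[symmetric])
  then have "sqrt (exp 1 * exp 1) < sqrt C" by (rule real_sqrt_less_mono)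
  then have sC: "exp 1 < sqrt C" by simp
  define \<delta> where "\<delta> = 1/2 - exp 1 / (2 * sqrt C)"
  have \<delta>0: "\<delta> > 0" unfolding \<delta>_def using sC C0 by (simp add: field_simps)
  have "eventually (\<lambda>r. 1 / (real r * log 2 (real r)) < \<delta> / (sqrt C * exp 1)) sequentially"
    using lim_inv_rlog \<delta>0 C0 by (intro order_tendstoD(2)) auto
  moreover have "eventually (\<lambda>r. 2 \<le> r) sequentially" by (rule eventually_ge_at_top)
  ultimately show ?thesis
  proof eventually_elim
    case (elim r)
    have r2: "2 \<le> real r" using elim by simp
    define t where "t = log 2 (real r)"
    have t1: "1 \<le> t" unfolding t_def using r2 by simp
    define L where "L = nat \<lceil>real r / (2 * C) * t\<rceil>"
    have Lge: "real r / (2 * C) * t \<le> real L" unfolding L_def by linarith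
    have "0 \<le> real r / (2 * C) * t" using C0 t1 by simp
    then have Lle: "real L \<le> real r / (2 * C) * t + 1" unfolding L_def
      using of_int_ceiling_le_add_one[of "real r / (2 * C) * t"] by linarith
    define \<gamma> where "\<gamma> = exp 1 / (2 * C) + exp 1 / (real r * t)"
    have \<gamma>0: "0 < \<gamma>" unfolding \<gamma>_def using C0 t1 r2 by (intro add_pos_pos) auto
    show ?case
    proof (rule g_le_asym[where L=L and a="log 2 C / 2" and \<gamma>=\<gamma>])
      show "2 \<le> r" using elim by simp
      have "real (nat \<lfloor>real r powr (real r / (2 * C))\<rfloor>) \<le> real r powr (real r / (2 * C))"
        by (simp add: floor_le_iff)
      also have "\<dots> = 2 powr (t * (real r / (2 * C)))"
      proof -
        have rr: "real r = 2 powr t" unfolding t_def using r2 by simp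
        have "(2 powr t) powr (real r / (2 * C)) = 2 powr (t * (real r / (2 * C)))" by (rule powr_powr)
        then show ?thesis using rr by metis
      qed
      also have "\<dots> \<le> 2 powr real L" using Lge by (intro powr_mono) (auto simp: mult.commute)
      also have "\<dots> = real (2 ^ L)" by (simp add: powr_realpow)
      finally show "nat \<lfloor>real r powr (real r / (2 * C))\<rfloor> \<le> 2 ^ L" by linarith
      show "real (nat \<lfloor>real r powr (log 2 C / 2)\<rfloor>) \<le> real r powr (log 2 C / 2)"
        by (simp add: floor_le_iff)
      have "1 < exp (2::real)" by simp
      then have "1 < C" using C by linarith
      then show "0 \<le> log 2 C / 2" by simp
      show "0 < \<gamma>" by (rule \<gamma>0)
      have "exp 1 * real L / (real r * t) \<le> exp 1 * (real r / (2 * C) * t + 1) / (real r * t)"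
        using Lle t1 r2 by (intro divide_right_mono mult_left_mono) auto
      also have "\<dots> = \<gamma>" unfolding \<gamma>_def using t1 r2 C0 by (simp add: field_simps)
      finally show "exp 1 * real L / (real r * log 2 (real r)) \<le> \<gamma>" unfolding t_def .
      have "sqrt C * \<gamma> = exp 1 / (2 * sqrt C) + sqrt C * exp 1 * (1 / (real r * t))"
      proof -
        have sq: "sqrt C * sqrt C = C" using C0 by simp
        show ?thesis unfolding \<gamma>_def using C0 sq by (simp add: field_simps)
      qed
      also have "\<dots> \<le> exp 1 / (2 * sqrt C) + \<delta>"
        using elim C0 unfolding t_def by (simp add: field_simps)
      also have "\<dots> = 1/2" unfolding \<delta>_def by simp
      finally have sg: "sqrt C * \<gamma> \<le> 1/2" .
      have "log 2 C / 2 = log 2 (sqrt C)" using C0 by (simp add: log_def ln_sqrt)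
      then have "log 2 C / 2 + log 2 \<gamma> = log 2 (sqrt C * \<gamma>)" using C0 \<gamma>0 by (simp add: log_mult)
      also have "\<dots> \<le> log 2 (1/2)" using sg C0 \<gamma>0 by (subst log_le_cancel_iff) auto
      also have "\<dots> = -1" by (simp add: log_divide)
      finally show "log 2 C / 2 + log 2 \<gamma> \<le> -1" .
    qed
  qed
qed

lemma part2:
  fixes \<epsilon> :: real assumes \<epsilon>: "\<epsilon> > 0"
  shows "\<forall>\<^sub>F r in sequentially.
     g (nat \<lfloor>2 powr (\<epsilon> * (log 2 (real r))\<^sup>2)\<rfloor>) (nat \<lfloor>2 powr (real r powr (1 - \<epsilon>))\<rfloor>) \<le> r"
proof -
  have "eventually (\<lambda>r. 4096 \<le> r) sequentially" by (rule eventually_ge_at_top)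
  then show ?thesis
  proof eventually_elim
    case (elim r)
    have r2: "4096 \<le> real r" using elim by simp
    define t where "t = log 2 (real r)"
    have "log 2 (2 ^ 12) \<le> t" unfolding t_def using r2 by (subst log_le_cancel_iff) auto
    moreover have "log 2 ((2::real) ^ 12) = 12" by (subst log_nat_power) auto
    ultimately have t12: "12 \<le> t" by simp
    have rr: "real r = 2 powr t" unfolding t_def using r2 by simp
    show ?case
    proof (cases "\<epsilon> < 1")
      case False
      have K1: "2 ^ floor_log r \<le> r" using elim by (intro floor_log_exp2_le) auto
      have "floor_log r = Suc (floor_log (r div 2))" using elim by (intro floor_log_rec) auto
      then have Kpos: "1 < Suc (floor_log r)" by simp
      show ?thesis
      proof (rule g_le_code_count[where K="floor_log r" and L=1, OF _ K1])
        show "nat \<lfloor>2 powr (\<epsilon> * (log 2 (real r))\<^sup>2)\<rfloor> * ((1 choose Suc (floor_log r)) * r ^ (1 - Suc (floor_log r))) < r ^ 1"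
          using Kpos elim by (simp add: binomial_eq_0)
        have "real r powr (1 - \<epsilon>) \<le> real r powr 0" using False r2 by (intro powr_mono) auto
        then have "real r powr (1 - \<epsilon>) \<le> 1" using r2 by simp
        then have "2 powr (real r powr (1 - \<epsilon>)) \<le> 2 powr 1" by (intro powr_mono) auto
        then have "2 powr (real r powr (1 - \<epsilon>)) \<le> 2" by simp
        then have "\<lfloor>2 powr (real r powr (1 - \<epsilon>))\<rfloor> \<le> 2"
          using of_int_floor_le[of "2 powr (real r powr (1 - \<epsilon>))"] by linarith
        then show "nat \<lfloor>2 powr (real r powr (1 - \<epsilon>))\<rfloor> \<le> 2 ^ 1" by (simp add: nat_le_iff)
      qed
    next
      case True
      define L where "L = nat \<lceil>real r powr (1 - \<epsilon>)\<rceil>"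
      have p0: "0 \<le> real r powr (1 - \<epsilon>)" by simp
      have Lge: "real r powr (1 - \<epsilon>) \<le> real L" unfolding L_def by linarith
      have Lle: "real L \<le> real r powr (1 - \<epsilon>) + 1" unfolding L_def
        using of_int_ceiling_le_add_one[of "real r powr (1 - \<epsilon>)"] p0 by linarith
      have p1: "1 \<le> real r powr (1 - \<epsilon>)" using True r2 by (smt (verit) ge_one_powr_ge_zero)
      define \<gamma> where "\<gamma> = exp 1 * (real r powr (1 - \<epsilon>) + 1) / (real r * t)"
      have pp: "0 < real r powr (1 - \<epsilon>) + 1" using p0 by linarith
      have \<gamma>0: "0 < \<gamma>" unfolding \<gamma>_def using t12 r2 by (intro divide_pos_pos mult_pos_pos pp) auto
      show ?thesis
      proof (rule g_le_asym[where L=L and a="\<epsilon> * t" and \<gamma>=\<gamma>])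
        show "2 \<le> r" using elim by simp
        have "2 powr (real r powr (1 - \<epsilon>)) \<le> 2 powr real L" using Lge by (intro powr_mono) auto
        also have "\<dots> = real (2 ^ L)" by (simp add: powr_realpow)
        finally have "real (nat \<lfloor>2 powr (real r powr (1 - \<epsilon>))\<rfloor>) \<le> real (2 ^ L)" by (simp add: floor_le_iff)
        then show "nat \<lfloor>2 powr (real r powr (1 - \<epsilon>))\<rfloor> \<le> 2 ^ L" by linarith
        have "real r powr (\<epsilon> * t) = 2 powr (t * (\<epsilon> * t))"
        proof -
          have "(2 powr t) powr (\<epsilon> * t) = 2 powr (t * (\<epsilon> * t))" by (rule powr_powr)
          then show ?thesis using rr by metis
        qed
        also have "\<dots> = 2 powr (\<epsilon> * (log 2 (real r))\<^sup>2)" unfolding t_def by (simp add: power2_eq_square ac_simps)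
        finally show "real (nat \<lfloor>2 powr (\<epsilon> * (log 2 (real r))\<^sup>2)\<rfloor>) \<le> real r powr (\<epsilon> * t)" by (simp add: floor_le_iff)
        show "0 \<le> \<epsilon> * t" using \<epsilon> t12 by simp
        show "0 < \<gamma>" by (rule \<gamma>0)
        show "exp 1 * real L / (real r * log 2 (real r)) \<le> \<gamma>"
          unfolding \<gamma>_def t_def[symmetric] using Lle t12 r2 by (intro divide_right_mono mult_left_mono) auto
        have "\<gamma> \<le> exp 1 * (2 * real r powr (1 - \<epsilon>)) / (real r * t)"
          unfolding \<gamma>_def using p1 t12 r2 by (intro divide_right_mono mult_left_mono) auto
        also have "real r powr (1 - \<epsilon>) = real r * real r powr (- \<epsilon>)"
        proof -
          have "real r powr (1 + (- \<epsilon>)) = real r powr 1 * real r powr (- \<epsilon>)" by (rule powr_add)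
          then show ?thesis using r2 by simp
        qed
        also have "exp 1 * (2 * (real r * real r powr (- \<epsilon>))) / (real r * t) = (2 * exp 1 / t) * real r powr (- \<epsilon>)"
          using r2 t12 by (simp add: field_simps)
        also have "\<dots> \<le> (1 / 2) * real r powr (- \<epsilon>)"
        proof (intro mult_right_mono)
          have "exp 1 \<le> (3::real)" by (rule exp_le)
          then show "2 * exp 1 / t \<le> 1 / 2" using t12 by (simp add: field_simps)
        qed simp
        also have "real r powr (- \<epsilon>) = 2 powr (- (\<epsilon> * t))"
        proof -
          have "(2 powr t) powr (- \<epsilon>) = 2 powr (t * (- \<epsilon>))" by (rule powr_powr)
          then show ?thesis using rr by (metis mult.commute mult_minus_left)
        qed
        also have "1 / 2 * 2 powr (- (\<epsilon> * t)) = 2 powr (- 1 - \<epsilon> * t)"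
          by (simp add: powr_diff powr_minus field_simps)
        finally have "\<gamma> \<le> 2 powr (- 1 - \<epsilon> * t)" .
        then have "log 2 \<gamma> \<le> log 2 (2 powr (- 1 - \<epsilon> * t))" using \<gamma>0 by (subst log_le_cancel_iff) auto
        then show "\<epsilon> * t + log 2 \<gamma> \<le> - 1" by simp
      qed
    qed
  qed
qed

lemma degenerate_col:
  fixes V :: "nat set" and adj :: "nat \<Rightarrow> nat \<Rightarrow> bool"
  assumes fin: "finite V" and r: "0 < r" and irr: "\<And>v. \<not> adj v v" and sym: "\<And>u v. adj u v \<Longrightarrow> adj v u"
    and deg: "\<And>S. S \<subseteq> V \<Longrightarrow> S \<noteq> {} \<Longrightarrow> \<exists>v\<in>S. card {u\<in>S. adj u v} < r"
  shows "\<exists>q. (\<forall>x. q x < r) \<and> (\<forall>u\<in>V. \<forall>v\<in>V. adj u v \<longrightarrow> q u \<noteq> q v)"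
  using fin deg
proof (induction "card V" arbitrary: V rule: less_induct)
  case less
  show ?case
  proof (cases "V = {}")
    case True then show ?thesis using r by (intro exI[of _ "\<lambda>_. 0"]) auto
  next
    case False
    obtain v where v: "v \<in> V" "card {u\<in>V. adj u v} < r" using less.prems(2)[of V] False by blast
    define V' where "V' = V - {v}"
    have cV: "card V' < card V" unfolding V'_def using v less.prems(1) by (meson card_Diff1_less)
    have fV: "finite V'" unfolding V'_def using less.prems(1) by simp
    have dV: "\<And>S. S \<subseteq> V' \<Longrightarrow> S \<noteq> {} \<Longrightarrow> \<exists>v\<in>S. card {u\<in>S. adj u v} < r"
      using less.prems(2) unfolding V'_def by blast
    obtain q where q: "\<forall>x. q x < r" "\<forall>u\<in>V'. \<forall>w\<in>V'. adj u w \<longrightarrow> q u \<noteq> q w"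
      using less.hyps[OF cV fV dV] by blast
    define N where "N = {u\<in>V. adj u v}"
    have "card (q ` N) \<le> card N" using less.prems(1) unfolding N_def by (intro card_image_le) auto
    then have "card (q ` N) < card {0..<r}" using v unfolding N_def by simp
    moreover have "finite (q ` N)" using less.prems(1) unfolding N_def by simp
    ultimately have "\<not> {0..<r} \<subseteq> q ` N" using card_mono by (metis not_le)
    then obtain c where c: "c < r" "c \<notin> q ` N" by (meson atLeastLessThan_iff subsetI zero_le)
    define q' where "q' = q(v := c)"
    have "\<forall>x. q' x < r" using q c unfolding q'_def by auto
    moreover have "\<forall>u\<in>V. \<forall>w\<in>V. adj u w \<longrightarrow> q' u \<noteq> q' w"
    proof (intro ballI impI)
      fix u w assume uw: "u \<in> V" "w \<in> V" "adj u w"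
      show "q' u \<noteq> q' w"
      proof (cases "u = v")
        case True
        then have "w \<noteq> v" using uw irr by auto
        moreover have "w \<in> N" unfolding N_def using uw True sym by auto
        ultimately show ?thesis using c True unfolding q'_def by auto
      next
        case False
        show ?thesis
        proof (cases "w = v")
          case True
          then have "u \<in> N" unfolding N_def using uw by auto
          then show ?thesis using c True False unfolding q'_def by auto
        next
          case False
          then show ?thesis using \<open>u \<noteq> v\<close> uw q unfolding q'_def V'_def by auto
        qed
      qed
    qed
    ultimately show ?thesis by blast
  qed
qed

definition Epairs :: "nat set \<Rightarrow> nat set set" where
  "Epairs S = {e. e \<subseteq> S \<and> card e = 2}"

definition badg :: "nat \<Rightarrow> nat \<Rightarrow> (nat set \<Rightarrow> nat) \<Rightarrow> (nat set \<Rightarrow> nat) \<Rightarrow> bool" where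
  "badg m r f h \<longleftrightarrow> (\<exists>S \<subseteq> {1..m}. S \<noteq> {} \<and> (\<forall>v\<in>S. r \<le> card {u\<in>S. u \<noteq> v \<and> f {u,v} = h {u,v}}))"

lemma card_Epairs: "finite S \<Longrightarrow> card (Epairs S) = card S choose 2"
  unfolding Epairs_def by (rule n_subsets)

lemma finite_Epairs: "finite S \<Longrightarrow> finite (Epairs S)"
  unfolding Epairs_def by (auto intro: finite_subset[of _ "Pow S"])

lemma card_agree_fixed_gen:
  assumes D: "finite D" and T: "T \<subseteq> D" and f: "\<forall>l\<in>T. f l < r"
  shows "card {h \<in> PiE D (\<lambda>_. {0..<r}). \<forall>l\<in>T. h l = f l} = r ^ (card D - card T)"
proof -
  have "{h \<in> PiE D (\<lambda>_. {0..<r}). \<forall>l\<in>T. h l = f l} = PiE D (\<lambda>l. if l \<in> T then {f l} else {0..<r})"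
    using T f by (auto simp: PiE_iff extensional_def split: if_splits)
  then have "card {h \<in> PiE D (\<lambda>_. {0..<r}). \<forall>l\<in>T. h l = f l} = (\<Prod>l\<in>D. if l \<in> T then 1 else r)"
    using D by (simp add: card_PiE if_distrib cong: if_cong)
  also have "\<dots> = r ^ card (D - T)"
    using D by (simp add: prod.If_cases Diff_eq)
  also have "card (D - T) = card D - card T" using T D by (simp add: card_Diff_subset finite_subset)
  finally show ?thesis .
qed

lemma handshake:
  assumes S: "finite S" and A: "A \<subseteq> Epairs S"
  shows "(\<Sum>v\<in>S. card {e\<in>A. v \<in> e}) = 2 * card A"
proof -
  have fA: "finite A" using A finite_Epairs[OF S] finite_subset by blast
  have "(\<Sum>v\<in>S. card {e\<in>A. v \<in> e}) = (\<Sum>v\<in>S. \<Sum>e\<in>{e\<in>A. v \<in> e}. 1)" by simp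
  also have "\<dots> = (\<Sum>e\<in>A. \<Sum>v\<in>{v\<in>S. v \<in> e}. 1)" using S fA by (rule sum.swap_restrict)
  also have "\<dots> = (\<Sum>e\<in>A. 2)"
  proof (rule sum.cong[OF refl])
    fix e assume "e \<in> A"
    then have "e \<subseteq> S" "card e = 2" using A unfolding Epairs_def by auto
    then have "{v\<in>S. v \<in> e} = e" by auto
    then show "(\<Sum>v\<in>{v\<in>S. v \<in> e}. 1) = (2::nat)" using \<open>card e = 2\<close> by simp
  qed
  finally show ?thesis by simp
qed

lemma card_star:
  assumes v: "v \<in> S"
  shows "card {e\<in>{e\<in>Epairs S. f e = h e}. v \<in> e} = card {u\<in>S. u \<noteq> v \<and> f {u,v} = h {u,v}}"
proof -
  have "{e\<in>{e\<in>Epairs S. f e = h e}. v \<in> e} = (\<lambda>u. {u,v}) ` {u\<in>S. u \<noteq> v \<and> f {u,v} = h {u,v}}"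
  proof (intro equalityI subsetI)
    fix e assume "e \<in> {e\<in>{e\<in>Epairs S. f e = h e}. v \<in> e}"
    then have e: "e \<subseteq> S" "card e = 2" "f e = h e" "v \<in> e" unfolding Epairs_def by auto
    then obtain x y where xy: "e = {x,y}" "x \<noteq> y" by (auto simp: card_2_iff)
    have "\<exists>u. e = {u,v} \<and> u \<noteq> v"
    proof (cases "x = v")
      case True then show ?thesis using xy by (intro exI[of _ y]) auto
    next
      case False then have "y = v" using e(4) xy by auto
      then show ?thesis using xy by (intro exI[of _ x]) auto
    qed
    then obtain u where u: "e = {u,v}" "u \<noteq> v" by blast
    have "u \<in> S" using u e(1) by blast
    then show "e \<in> (\<lambda>u. {u,v}) ` {u\<in>S. u \<noteq> v \<and> f {u,v} = h {u,v}}"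
      using u e(3) by blast
  next
    fix e assume "e \<in> (\<lambda>u. {u,v}) ` {u\<in>S. u \<noteq> v \<and> f {u,v} = h {u,v}}"
    then show "e \<in> {e\<in>{e\<in>Epairs S. f e = h e}. v \<in> e}" using v unfolding Epairs_def by auto
  qed
  moreover have "inj_on (\<lambda>u. {u,v}) {u\<in>S. u \<noteq> v \<and> f {u,v} = h {u,v}}"
    by (auto simp: inj_on_def doubleton_eq_iff)
  ultimately show ?thesis by (simp add: card_image)
qed

lemma half_ceil: "(p::nat) \<le> 2 * a \<Longrightarrow> (p + 1) div 2 \<le> a" by presburger

lemma count_bad:
  assumes f: "f \<in> PiE (Epairs {1..m}) (\<lambda>_. {0..<r})"
  shows "card {h \<in> PiE (Epairs {1..m}) (\<lambda>_. {0..<r}). badg m r f h} \<le>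
    (\<Sum>k\<in>{Suc r..m}. (m choose k) * (((k choose 2) choose ((k*r+1) div 2)) * r ^ ((m choose 2) - (k*r+1) div 2)))"
proof -
  let ?D = "Epairs {1..m}"
  let ?U = "PiE ?D (\<lambda>_. {0..<r})"
  let ?tt = "\<lambda>k. (k*r+1) div 2"
  let ?Ss = "\<lambda>k. {S. S \<subseteq> {1..m} \<and> card S = k}"
  let ?Ts = "\<lambda>k S. {T. T \<subseteq> Epairs S \<and> card T = ?tt k}"
  let ?H = "\<lambda>T. {h\<in>?U. \<forall>e\<in>T. h e = f e}"
  have fD: "finite ?D" by (rule finite_Epairs) simp
  have cD: "card ?D = m choose 2" by (simp add: card_Epairs)
  have sub: "{h \<in> ?U. badg m r f h} \<subseteq> (\<Union>k\<in>{Suc r..m}. \<Union>S\<in>?Ss k. \<Union>T\<in>?Ts k S. ?H T)"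
  proof
    fix h assume "h \<in> {h \<in> ?U. badg m r f h}"
    then have hU: "h \<in> ?U" and "badg m r f h" by auto
    then obtain S where S: "S \<subseteq> {1..m}" "S \<noteq> {}" and deg: "\<forall>v\<in>S. r \<le> card {u\<in>S. u \<noteq> v \<and> f {u,v} = h {u,v}}"
      unfolding badg_def by blast
    have fS: "finite S" using S(1) finite_subset by blast
    define k where "k = card S"
    obtain v where v: "v \<in> S" using S(2) by blast
    have "card {u\<in>S. u \<noteq> v \<and> f {u,v} = h {u,v}} \<le> card (S - {v})" using fS by (intro card_mono) auto
    moreover have "card (S - {v}) = k - 1" using v fS unfolding k_def by simp
    moreover have "r \<le> card {u\<in>S. u \<noteq> v \<and> f {u,v} = h {u,v}}" using deg v by blast
    ultimately have "r \<le> k - 1" by linarith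
    moreover have "k \<ge> 1" unfolding k_def using fS S(2) by (simp add: Suc_leI card_gt_0_iff)
    ultimately have k1: "Suc r \<le> k" by linarith
    have k2: "k \<le> m" unfolding k_def using card_mono[OF _ S(1)] by simp
    define A where "A = {e\<in>Epairs S. f e = h e}"
    have AS: "A \<subseteq> Epairs S" unfolding A_def by auto
    have "of_nat (card S) * r \<le> (\<Sum>v\<in>S. card {e\<in>A. v \<in> e})"
    proof (rule sum_bounded_below)
      fix v assume "v \<in> S" then show "r \<le> card {e\<in>A. v \<in> e}" unfolding A_def using card_star[of v S f h] deg by simp
    qed
    also have "\<dots> = 2 * card A" using handshake[OF fS AS] .
    finally have "?tt k \<le> card A" unfolding k_def by (intro half_ceil) simp
    then obtain T where T: "T \<subseteq> A" "card T = ?tt k" using obtain_subset_with_card_n by metis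
    have "T \<in> ?Ts k S" using T AS by auto
    moreover have "S \<in> ?Ss k" using S unfolding k_def by auto
    moreover have "h \<in> ?H T" using hU T unfolding A_def by auto
    moreover have "k \<in> {Suc r..m}" using k1 k2 by simp
    ultimately show "h \<in> (\<Union>k\<in>{Suc r..m}. \<Union>S\<in>?Ss k. \<Union>T\<in>?Ts k S. ?H T)" by blast
  qed
  have fU: "finite ?U" using fD by (intro finite_PiE) auto
  have fH: "finite (?H T)" for T by (rule finite_subset[of _ ?U]) (use fU in auto)
  have fSs: "finite (?Ss k)" for k by (rule finite_subset[of _ "Pow {1..m}"]) auto
  have fTs: "finite (?Ts k S)" if "S \<subseteq> {1..m}" for k S
  proof -
    have "finite S" using that finite_subset by blast
    then have "finite (Pow (Epairs S))" by (simp add: finite_Epairs)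
    then show ?thesis by (rule finite_subset[rotated]) auto
  qed
  have "card {h \<in> ?U. badg m r f h} \<le> card (\<Union>k\<in>{Suc r..m}. \<Union>S\<in>?Ss k. \<Union>T\<in>?Ts k S. ?H T)"
  proof (rule card_mono[OF _ sub])
    have "(\<Union>k\<in>{Suc r..m}. \<Union>S\<in>?Ss k. \<Union>T\<in>?Ts k S. ?H T) \<subseteq> ?U" by blast
    then show "finite (\<Union>k\<in>{Suc r..m}. \<Union>S\<in>?Ss k. \<Union>T\<in>?Ts k S. ?H T)" using fU finite_subset by blast
  qed
  also have "\<dots> \<le> (\<Sum>k\<in>{Suc r..m}. card (\<Union>S\<in>?Ss k. \<Union>T\<in>?Ts k S. ?H T))" by (rule card_UN_le) simp
  also have "\<dots> \<le> (\<Sum>k\<in>{Suc r..m}. (m choose k) * (((k choose 2) choose ?tt k) * r ^ ((m choose 2) - ?tt k)))"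
  proof (rule sum_mono)
    fix k assume k: "k \<in> {Suc r..m}"
    have "card (\<Union>S\<in>?Ss k. \<Union>T\<in>?Ts k S. ?H T) \<le> (\<Sum>S\<in>?Ss k. card (\<Union>T\<in>?Ts k S. ?H T))"
      by (rule card_UN_le[OF fSs])
    also have "\<dots> \<le> (\<Sum>S\<in>?Ss k. ((k choose 2) choose ?tt k) * r ^ ((m choose 2) - ?tt k))"
    proof (rule sum_mono)
      fix S assume S: "S \<in> ?Ss k"
      have fS: "finite S" using S finite_subset by auto
      have "card (\<Union>T\<in>?Ts k S. ?H T) \<le> (\<Sum>T\<in>?Ts k S. card (?H T))"
        by (rule card_UN_le) (use S fTs in auto)
      also have "\<dots> = (\<Sum>T\<in>?Ts k S. r ^ ((m choose 2) - ?tt k))"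
      proof (rule sum.cong[OF refl])
        fix T assume T: "T \<in> ?Ts k S"
        have TD: "T \<subseteq> ?D" using T S unfolding Epairs_def by auto
        have "\<forall>l\<in>T. f l < r" using f TD by (auto simp: PiE_iff)
        then show "card (?H T) = r ^ ((m choose 2) - ?tt k)"
          using card_agree_fixed_gen[OF fD TD] T cD by simp
      qed
      also have "\<dots> = (card (Epairs S) choose ?tt k) * r ^ ((m choose 2) - ?tt k)"
        using n_subsets[of "Epairs S" "?tt k"] finite_Epairs[OF fS] by simp
      also have "\<dots> = ((k choose 2) choose ?tt k) * r ^ ((m choose 2) - ?tt k)"
        using S card_Epairs[OF fS] by simp
      finally show "card (\<Union>T\<in>?Ts k S. ?H T) \<le> ((k choose 2) choose ?tt k) * r ^ ((m choose 2) - ?tt k)" .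
    qed
    also have "\<dots> = (m choose k) * (((k choose 2) choose ?tt k) * r ^ ((m choose 2) - ?tt k))"
      using n_subsets[of "{1..m}" k] by simp
    finally show "card (\<Union>S\<in>?Ss k. \<Union>T\<in>?Ts k S. ?H T) \<le> (m choose k) * (((k choose 2) choose ?tt k) * r ^ ((m choose 2) - ?tt k))" .
  qed
  finally show ?thesis .
qed

lemma g_le_random:
  assumes r: "0 < r"
    and cnt: "n * (\<Sum>k\<in>{Suc r..m}. (m choose k) * (((k choose 2) choose ((k*r+1) div 2)) * r ^ ((m choose 2) - (k*r+1) div 2))) < r ^ (m choose 2)"
  shows "g m n \<le> r"
proof -
  let ?D = "Epairs {1..m}"
  let ?U = "PiE ?D (\<lambda>_. {0..<r})"
  let ?B = "(\<Sum>k\<in>{Suc r..m}. (m choose k) * (((k choose 2) choose ((k*r+1) div 2)) * r ^ ((m choose 2) - (k*r+1) div 2)))"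
  have fD: "finite ?D" by (rule finite_Epairs) simp
  have cU: "card ?U = r ^ (m choose 2)" using fD by (simp add: card_PiE card_Epairs)
  have fU: "finite ?U" using fD by (intro finite_PiE) auto
  have sym: "badg m r h f" if "badg m r f h" for f h
  proof -
    have "{u\<in>S. u \<noteq> v \<and> f {u,v} = h {u,v}} = {u\<in>S. u \<noteq> v \<and> h {u,v} = f {u,v}}" for S v by auto
    then show ?thesis using that unfolding badg_def by simp
  qed
  have cnt': "n * ?B < card ?U" using cnt cU by simp
  obtain \<sigma> where s1: "\<forall>i<n. \<sigma> i \<in> ?U" and s2: "\<forall>i<n. \<forall>i'<n. i \<noteq> i' \<longrightarrow> \<not> badg m r (\<sigma> i) (\<sigma> i')"
    using greedy[of ?U "badg m r", OF fU sym count_bad cnt'] by blast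
  define Y where "Y j i i' = (if \<sigma> (j - 1) {i, i'} < r then \<sigma> (j - 1) {i, i'} else 0)" for j i i'
  show ?thesis
  proof (rule g_le_rowfam[where Y=Y])
    fix j i i' show "Y j i i' < r" unfolding Y_def using r by auto
  next
    fix j j' assume jj: "1 \<le> j" "j < j'" "j' \<le> n"
    define f where "f = \<sigma> (j - 1)"
    define h where "h = \<sigma> (j' - 1)"
    have fU': "f \<in> ?U" and hU': "h \<in> ?U" unfolding f_def h_def using s1 jj by auto
    have nb: "\<not> badg m r f h" unfolding f_def h_def using s2 jj by auto
    define adj where "adj u v = (u \<noteq> v \<and> f {u,v} = h {u,v})" for u v
    obtain q where q: "\<forall>x. q x < r" "\<forall>u\<in>{1..m}. \<forall>v\<in>{1..m}. adj u v \<longrightarrow> q u \<noteq> q v"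
    proof (rule exE[OF degenerate_col[of "{1..m}" r adj]])
      show "finite {1..m}" by simp
      show "0 < r" by (rule r)
      show "\<And>v. \<not> adj v v" unfolding adj_def by simp
      show "\<And>u v. adj u v \<Longrightarrow> adj v u" unfolding adj_def by (auto simp: insert_commute)
      show "\<exists>v\<in>S. card {u\<in>S. adj u v} < r" if "S \<subseteq> {1..m}" "S \<noteq> {}" for S
        using nb that unfolding badg_def adj_def by (meson not_le)
    qed blast
    show "\<exists>q. (\<forall>i. q i < r) \<and> (\<forall>i i'. 1 \<le> i \<and> i < i' \<and> i' \<le> m \<and> Y j i i' = Y j' i i' \<longrightarrow> q i \<noteq> q i')"
    proof (intro exI conjI allI impI)
      fix i show "q i < r" using q by auto
    next
      fix i i' assume a: "1 \<le> i \<and> i < i' \<and> i' \<le> m \<and> Y j i i' = Y j' i i'"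
      have e: "{i, i'} \<in> ?D" unfolding Epairs_def using a by auto
      have "f {i,i'} < r" "h {i,i'} < r" using fU' hU' e by (auto simp: PiE_iff)
      then have "f {i,i'} = h {i,i'}" using a unfolding Y_def f_def h_def by simp
      then have "adj i i'" unfolding adj_def using a by simp
      then show "q i \<noteq> q i'" using q a by auto
    qed
  qed
qed

lemma half_ceil2: "(p::nat) \<le> 2 * ((p + 1) div 2)" by presburger

lemma F_mono:
  fixes r k :: real
  assumes r: "1 \<le> r" and k: "r + 1 \<le> k" and l3: "3 \<le> ln (r^2 / (exp 1 * k))"
  shows "k * (ln r - 3) - k * r / 2 * ln (r^2 / (exp 1 * k))
     \<le> (r + 1) * (ln r - 3) - (r + 1) * r / 2 * ln (r^2 / (exp 1 * (r + 1)))"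
proof -
  define a where "a = ln (r^2 / (exp 1 * (r + 1)))"
  define d where "d = ln (k / (r + 1))"
  define l where "l = ln (r^2 / (exp 1 * k))"
  have pos: "0 < r" "0 < k" "0 < r + 1" using r k by auto
  have ne: "exp 1 * k \<noteq> 0" "r + 1 \<noteq> 0" "k \<noteq> 0" "exp 1 \<noteq> 0" using pos by auto
  have "(r^2 / (exp 1 * (r + 1))) / (k / (r + 1)) = r^2 / (exp 1 * k)"
    using ne by (simp add: divide_simps)
  then have "r^2 / (exp 1 * k) = (r^2 / (exp 1 * (r + 1))) / (k / (r + 1))" by simp
  moreover have lnd: "\<And>A B::real. 0 < A \<Longrightarrow> 0 < B \<Longrightarrow> ln (A / B) = ln A - ln B" by (simp add: ln_div)
  ultimately have "l = ln ((r^2 / (exp 1 * (r + 1))) / (k / (r + 1)))" unfolding l_def by metis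
  also have "\<dots> = ln (r^2 / (exp 1 * (r + 1))) - ln (k / (r + 1))" using pos by (intro lnd) auto
  finally have la: "l = a - d" unfolding a_def d_def .
  have d0: "0 \<le> d" unfolding d_def using k pos by simp
  have "d \<le> k / (r + 1) - 1" unfolding d_def using pos by (intro ln_le_minus_one) simp
  then have d1: "(r + 1) * d \<le> k - (r + 1)" using pos by (simp add: field_simps)
  have l3': "3 \<le> l" using l3 unfolding l_def .
  have kk: "0 \<le> k - (r + 1)" using k by simp
  have "3 * (k - (r + 1)) \<le> l * (k - (r + 1))" using l3' kk by (intro mult_right_mono) auto
  moreover have "k * l - (r + 1) * a = (k - (r + 1)) * l - (r + 1) * d"
  proof -
    have aa: "a = l + d" using la by simp
    show ?thesis unfolding aa by (simp add: algebra_simps)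
  qed
  ultimately have "2 * (k - (r + 1)) \<le> k * l - (r + 1) * a" using d1 by (simp add: algebra_simps)
  then have A: "r * (2 * (k - (r + 1))) \<le> r * (k * l - (r + 1) * a)" using pos by (intro mult_left_mono) auto
  have "ln r \<le> r - 1" using pos by (intro ln_le_minus_one)
  then have B: "(k - (r + 1)) * (ln r - 3) \<le> (k - (r + 1)) * r" using kk by (intro mult_left_mono) auto
  have "k * (ln r - 3) - k * r / 2 * l - ((r + 1) * (ln r - 3) - (r + 1) * r / 2 * a)
      = (k - (r + 1)) * (ln r - 3) - r * (k * l - (r + 1) * a) / 2" by (simp add: field_simps)
  also have "\<dots> \<le> 0"
  proof -
    have "r * (2 * (k - (r + 1))) = 2 * ((k - (r + 1)) * r)" by simp
    then show ?thesis using A B by linarith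
  qed
  finally show ?thesis unfolding l_def a_def by simp
qed

lemma term_bound:
  fixes r m k :: nat
  assumes r: "3 \<le> r" and k1: "r + 1 \<le> k" and km: "k \<le> m" and m: "real m \<le> exp (-4) * real r ^ 2"
  shows "real (m choose k) * real ((k choose 2) choose ((k*r+1) div 2)) / real r ^ ((k*r+1) div 2)
         \<le> exp (real k * (ln (real r) - 3) - real k * real r / 2 * ln (real r ^ 2 / (exp 1 * real k)))"
proof -
  define t where "t = (k*r+1) div 2"
  have r0: "0 < real r" "0 < real k" using r k1 by auto
  have "k * r \<le> 2 * t" unfolding t_def using half_ceil2[of "k*r"] .
  then have "real (k * r) \<le> real (2 * t)" by (simp only: of_nat_le_iff)
  then have t1: "real k * real r / 2 \<le> real t" by simp
  have tpos: "0 < t" unfolding t_def using r k1 by simp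
  have e43: "exp 1 * exp (-4) = exp (-3::real)" by (simp add: exp_add[symmetric])
  have "real (m choose k) \<le> (exp 1 * real m / real k) ^ k" by (rule binom_real_bound)
  also have "\<dots> \<le> (exp (-3) * real r) ^ k"
  proof (rule power_mono)
    have "exp 1 * real m \<le> exp 1 * (exp (-4) * real r ^ 2)" using m by simp
    also have "\<dots> = exp (-3) * real r * real r" using e43 by (simp add: power2_eq_square algebra_simps)
    also have "\<dots> \<le> exp (-3) * real r * real k" using k1 by (intro mult_left_mono) auto
    finally show "exp 1 * real m / real k \<le> exp (-3) * real r" using r0 by (simp add: field_simps)
  qed simp
  also have "\<dots> = exp (real k * (ln (real r) - 3))"
  proof -
    have "exp (real k * (ln (real r) - 3)) = exp (ln (real r) - 3) ^ k" by (rule exp_of_nat_mult)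
    moreover have "exp (ln (real r) + (-3)) = exp (ln (real r)) * exp (-3)" by (rule exp_add)
    ultimately show ?thesis using r0 by (simp add: mult.commute)
  qed
  finally have f1: "real (m choose k) \<le> exp (real k * (ln (real r) - 3))" .
  define y where "y = exp 1 * real k / real r ^ 2"
  have y0: "0 < y" unfolding y_def using r0 by simp
  have "y \<le> exp 1 * (exp (-4) * real r ^ 2) / real r ^ 2" unfolding y_def using km m r0
    by (intro divide_right_mono mult_left_mono) auto
  also have "\<dots> = exp (-3)" using r0 e43 by simp
  finally have y3: "y \<le> exp (-3)" .
  then have y1: "y \<le> 1" by (smt (verit) exp_le_one_iff)
  have K2: "real (k choose 2) \<le> real k ^ 2 / 2"
  proof -
    have "2 * (k choose 2) \<le> k * (k - 1)" by (simp add: choose_two)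
    also have "\<dots> \<le> k * k" by simp
    finally have "real (2 * (k choose 2)) \<le> real (k * k)" by (simp only: of_nat_le_iff)
    then show ?thesis by (simp add: power2_eq_square)
  qed
  have "real ((k choose 2) choose t) / real r ^ t \<le> (exp 1 * real (k choose 2) / real t) ^ t / real r ^ t"
    using r0 by (intro divide_right_mono binom_real_bound) auto
  also have "\<dots> = (exp 1 * real (k choose 2) / (real t * real r)) ^ t"
    by (simp add: power_divide power_mult_distrib)
  also have "\<dots> \<le> y ^ t"
  proof (rule power_mono)
    have "exp 1 * real (k choose 2) \<le> exp 1 * (real k ^ 2 / 2)" using K2 by simp
    moreover have "real k * real r / 2 * real r \<le> real t * real r" using t1 r0 by (intro mult_right_mono) auto
    ultimately have "exp 1 * real (k choose 2) / (real t * real r) \<le> exp 1 * (real k ^ 2 / 2) / (real k * real r / 2 * real r)"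
      using r0 tpos by (intro frac_le) auto
    also have "\<dots> = y" unfolding y_def using r0 by (simp add: field_simps power2_eq_square)
    finally show "exp 1 * real (k choose 2) / (real t * real r) \<le> y" .
  qed simp
  also have "\<dots> = y powr real t" using y0 by (simp add: powr_realpow)
  also have "\<dots> \<le> y powr (real k * real r / 2)" using y0 y1 t1 by (intro powr_mono') auto
  also have "\<dots> = exp (- (real k * real r / 2 * ln (real r ^ 2 / (exp 1 * real k))))"
  proof -
    have "real r ^ 2 / (exp 1 * real k) = inverse y" unfolding y_def by simp
    then have "ln (real r ^ 2 / (exp 1 * real k)) = - ln y" using y0 by (simp add: ln_inverse)
    then show ?thesis using y0 by (simp add: powr_def)
  qed
  finally have f2: "real ((k choose 2) choose t) / real r ^ t \<le> exp (- (real k * real r / 2 * ln (real r ^ 2 / (exp 1 * real k))))" .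
  have "real (m choose k) * real ((k choose 2) choose t) / real r ^ t
      = real (m choose k) * (real ((k choose 2) choose t) / real r ^ t)" by simp
  also have "\<dots> \<le> exp (real k * (ln (real r) - 3)) * exp (- (real k * real r / 2 * ln (real r ^ 2 / (exp 1 * real k))))"
    using f1 f2 by (intro mult_mono) auto
  also have "\<dots> = exp (real k * (ln (real r) - 3) - real k * real r / 2 * ln (real r ^ 2 / (exp 1 * real k)))"
    by (simp add: exp_add[symmetric])
  finally show ?thesis unfolding t_def .
qed

lemma G_neg1: "eventually (\<lambda>r::nat. (real r ^ 2 / 2) * ln (real r) - real r ^ 2 + 2 * ln (real r) - 4
   + ((real r + 1) * (ln (real r) - 3) - (real r + 1) * real r / 2 * (2 * ln (real r) - 1 - ln (real r + 1)))  < 0) sequentially"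
  by real_asymp

lemma part3_ev:
  "\<forall>\<^sub>F r in sequentially.
     g (nat \<lfloor>exp (-4) * (real r)\<^sup>2\<rfloor>) (nat \<lfloor>real r powr ((real r)\<^sup>2 / 2) / exp ((real r)\<^sup>2)\<rfloor>) \<le> r"
proof -
  have "eventually (\<lambda>r::nat. 3 \<le> r) sequentially" by (rule eventually_ge_at_top)
  then show ?thesis using G_neg1
  proof eventually_elim
    case (elim r)
    define m where "m = nat \<lfloor>exp (-4) * (real r)\<^sup>2\<rfloor>"
    define n where "n = nat \<lfloor>real r powr ((real r)\<^sup>2 / 2) / exp ((real r)\<^sup>2)\<rfloor>"
    define N where "N = m choose 2"
    define F where "F = (\<lambda>k::real. k * (ln (real r) - 3) - k * real r / 2 * ln (real r ^ 2 / (exp 1 * k)))"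
    have r3: "3 \<le> real r" using elim by simp
    have r0: "0 < real r" using r3 by simp
    have mle: "real m \<le> exp (-4) * real r ^ 2" unfolding m_def by (simp add: floor_le_iff)
    have nle: "real n \<le> real r powr ((real r)\<^sup>2 / 2) / exp ((real r)\<^sup>2)" unfolding n_def by (simp add: floor_le_iff)
    have lnr1: "ln (real r ^ 2 / (exp 1 * (real r + 1))) = 2 * ln (real r) - 1 - ln (real r + 1)"
      using r0 by (simp add: ln_div ln_mult ln_realpow)
    have tk: "real ((m choose k) * (((k choose 2) choose ((k*r+1) div 2)) * r ^ (N - (k*r+1) div 2)))
              \<le> real r ^ N * exp (F (real r + 1))" if k: "k \<in> {Suc r..m}" for k
    proof -
      define t where "t = (k*r+1) div 2"
      show ?thesis
      proof (cases "(k choose 2) choose t = 0")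
        case True then show ?thesis unfolding t_def[symmetric] True by simp
      next
        case False
        then have tK: "t \<le> k choose 2" by (meson binomial_eq_0 not_le)
        have "card (Epairs {1..k}) \<le> card (Epairs {1..m})"
          using k by (intro card_mono finite_Epairs) (auto simp: Epairs_def)
        then have "k choose 2 \<le> N" unfolding N_def by (simp add: card_Epairs)
        with tK have tN: "t \<le> N" by simp
        have pw: "real r ^ (N - t) = real r ^ N / real r ^ t"
          using tN r0 by (simp add: power_diff)
        have "real ((m choose k) * (((k choose 2) choose t) * r ^ (N - t)))
            = real r ^ N * (real (m choose k) * real ((k choose 2) choose t) / real r ^ t)"
          by (simp add: pw)
        also have "\<dots> \<le> real r ^ N * exp (F (real k))"
          unfolding F_def t_def using term_bound[of r k m] elim k mle by (intro mult_left_mono) auto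
        also have "\<dots> \<le> real r ^ N * exp (F (real r + 1))"
        proof (intro mult_left_mono exp_mono)
          have kle: "real k \<le> exp (-4) * real r ^ 2" using k mle by auto
          have ee: "exp 3 * exp 1 * exp (-4) = (1::real)" by (simp add: exp_add[symmetric])
          have "exp 3 * (exp 1 * real k) \<le> (exp 3 * exp 1) * (exp (-4) * real r ^ 2)"
          proof -
            have "exp 3 * exp 1 * real k \<le> exp 3 * exp 1 * (exp (-4) * real r ^ 2)"
              using kle by (intro mult_left_mono) auto
            then show ?thesis by (simp only: mult.assoc)
          qed
          also have "\<dots> = (exp 3 * exp 1 * exp (-4)) * real r ^ 2" by (simp only: mult.assoc)
          also have "\<dots> = real r ^ 2" using ee by simp
          finally have x: "exp 3 * (exp 1 * real k) \<le> real r ^ 2" .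
          have kp: "0 < exp 1 * real k" using k by simp
          have "exp 3 \<le> real r ^ 2 / (exp 1 * real k)" using x kp by (simp add: pos_le_divide_eq)
          then have "ln (exp 3) \<le> ln (real r ^ 2 / (exp 1 * real k))" using k r0 by (subst ln_le_cancel_iff) auto
          then have "3 \<le> ln (real r ^ 2 / (exp 1 * real k))" by simp
          then show "F (real k) \<le> F (real r + 1)" unfolding F_def using k r3
            by (intro F_mono) auto
        qed simp
        finally show ?thesis unfolding t_def .
      qed
    qed
    have "real (n * (\<Sum>k\<in>{Suc r..m}. (m choose k) * (((k choose 2) choose ((k*r+1) div 2)) * r ^ (N - (k*r+1) div 2))))
        = real n * (\<Sum>k\<in>{Suc r..m}. real ((m choose k) * (((k choose 2) choose ((k*r+1) div 2)) * r ^ (N - (k*r+1) div 2))))"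
      by (simp only: of_nat_mult of_nat_sum)
    also have "\<dots> \<le> real n * (\<Sum>k\<in>{Suc r..m}. real r ^ N * exp (F (real r + 1)))"
      using tk by (intro mult_left_mono sum_mono) auto
    also have "\<dots> \<le> real n * (real m * (real r ^ N * exp (F (real r + 1))))"
    proof (intro mult_left_mono)
      have "real (m - r) \<le> real m" by simp
      then show "(\<Sum>k\<in>{Suc r..m}. real r ^ N * exp (F (real r + 1))) \<le> real m * (real r ^ N * exp (F (real r + 1)))"
        by (simp, intro mult_right_mono) auto
    qed simp
    also have "\<dots> = real r ^ N * (real n * real m * exp (F (real r + 1)))" by simp
    also have "\<dots> < real r ^ N * 1"
    proof (intro mult_strict_left_mono)
      have "real n * real m \<le> (real r powr ((real r)\<^sup>2 / 2) / exp ((real r)\<^sup>2)) * (exp (-4) * real r ^ 2)"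
        using nle mle by (intro mult_mono) auto
      also have "\<dots> = exp ((real r ^ 2 / 2) * ln (real r) - real r ^ 2 + 2 * ln (real r) - 4)"
      proof -
        have a1: "real r powr ((real r)\<^sup>2 / 2) = exp ((real r ^ 2 / 2) * ln (real r))" using r0 by (simp add: powr_def)
        have a2: "real r ^ 2 = exp (2 * ln (real r))" using r0 by (simp add: exp_double)
        have "exp ((real r ^ 2 / 2) * ln (real r) - real r ^ 2 + 2 * ln (real r) - 4)
            = exp ((real r ^ 2 / 2) * ln (real r)) / exp (real r ^ 2) * exp (2 * ln (real r)) / exp 4"
          by (simp only: exp_add exp_diff)
        also have "\<dots> = (real r powr ((real r)\<^sup>2 / 2) / exp ((real r)\<^sup>2)) * (exp (-4) * real r ^ 2)"
          unfolding a1 by (subst (2) a2) (simp add: exp_minus field_simps)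
        finally show ?thesis by simp
      qed
      finally have "real n * real m * exp (F (real r + 1)) \<le> exp ((real r ^ 2 / 2) * ln (real r) - real r ^ 2 + 2 * ln (real r) - 4) * exp (F (real r + 1))"
        by (intro mult_right_mono) auto
      also have "\<dots> = exp ((real r ^ 2 / 2) * ln (real r) - real r ^ 2 + 2 * ln (real r) - 4 + F (real r + 1))"
        by (simp add: exp_add)
      also have "\<dots> < exp 0" using elim lnr1 unfolding F_def by (subst exp_less_cancel_iff) simp
      finally show "real n * real m * exp (F (real r + 1)) < 1" by simp
    qed (use r0 in simp)
    finally have "n * (\<Sum>k\<in>{Suc r..m}. (m choose k) * (((k choose 2) choose ((k*r+1) div 2)) * r ^ (N - (k*r+1) div 2))) < r ^ N"
      by (simp only: mult_1_right of_nat_power[symmetric] of_nat_less_iff)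
    then have "g m n \<le> r" unfolding N_def using r0 by (intro g_le_random) auto
    then show ?case unfolding m_def n_def .
  qed
qed

theorem theorem1p3:
  shows "(\<forall>C::real. C > exp 2 \<longrightarrow>
            (\<forall>\<^sub>F r in sequentially.
               g (nat \<lfloor>real r powr (log 2 C / 2)\<rfloor>) (nat \<lfloor>real r powr (real r / (2 * C))\<rfloor>) \<le> r))
       \<and> (\<forall>\<epsilon>::real. \<epsilon> > 0 \<longrightarrow>
            (\<forall>\<^sub>F r in sequentially.
               g (nat \<lfloor>2 powr (\<epsilon> * (log 2 (real r))\<^sup>2)\<rfloor>) (nat \<lfloor>2 powr (real r powr (1 - \<epsilon>))\<rfloor>) \<le> r))
       \<and> (\<exists>c::real. c > 0 \<and>
            (\<forall>\<^sub>F r in sequentially.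
               g (nat \<lfloor>c * (real r)\<^sup>2\<rfloor>) (nat \<lfloor>real r powr ((real r)\<^sup>2 / 2) / exp ((real r)\<^sup>2)\<rfloor>) \<le> r))"
proof (intro conjI allI impI)
  fix C :: real assume "C > exp 2" then show "\<forall>\<^sub>F r in sequentially.
               g (nat \<lfloor>real r powr (log 2 C / 2)\<rfloor>) (nat \<lfloor>real r powr (real r / (2 * C))\<rfloor>) \<le> r"
    by (rule part1)
next
  fix \<epsilon> :: real assume "\<epsilon> > 0" then show "\<forall>\<^sub>F r in sequentially.
               g (nat \<lfloor>2 powr (\<epsilon> * (log 2 (real r))\<^sup>2)\<rfloor>) (nat \<lfloor>2 powr (real r powr (1 - \<epsilon>))\<rfloor>) \<le> r"
    by (rule part2)
next
  show "\<exists>c::real. c > 0 \<and>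
            (\<forall>\<^sub>F r in sequentially.
               g (nat \<lfloor>c * (real r)\<^sup>2\<rfloor>) (nat \<lfloor>real r powr ((real r)\<^sup>2 / 2) / exp ((real r)\<^sup>2)\<rfloor>) \<le> r)"
    using part3_ev by (intro exI[of _ "exp (-4)"]) simp
qed

end
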